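(* For every integer $d\ge 3$, the space $\mathcal P_d$ is path connected.
   Context: A polynomial knot is a map $\phi:\mathbb R\to\mathbb R^3$ with real polynomial components which is a smooth embedding ($\phi$ injective and $\phi'(t)\ne0$ for all $t$). For $d\ge2$, $\mathcal A_d$ is the set of polynomial maps $t\mapsto(f(t),g(t),h(t))$ with $\deg f\le d-2$, $\deg g\le d-1$, $\deg h\le d$, topologized via the bijection $\eta:\mathcal A_d\to\mathbb R^{3d}$ sending $(f,g,h)$ to the vector $(a_0,\dots,a_{d-2},b_0,\dots,b_{d-1},c_0,\dots,c_d)$ of coefficients of $f=\sum a_it^i$, $g=\sum b_it^i$, $h=\sum c_it^i$ (Euclidean topology). The zero polynomial has degree $-\infty$. $\mathcal P_d$ is the subspace of $\mathcal A_d$ consisting of polynomial knots $(f,g,h)$ with $\deg f<\deg g<\deg h\le d$. *)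

theory Defs
  imports "HOL-Analysis.Analysis" "HOL-Computational_Algebra.Polynomial"
begin

text \<open>Degree with the convention that the zero polynomial has degree minus infinity;
  we encode minus infinity by -1, which is below every genuine degree and is not
  strictly below itself, so all strict comparisons agree with the paper.\<close>
definition pdeg :: "real poly \<Rightarrow> int" where
  "pdeg p = (if p = 0 then -1 else int (degree p))"

definition poly_knot :: "real poly \<times> real poly \<times> real poly \<Rightarrow> bool" where
  "poly_knot \<phi> = (case \<phi> of (f, g, h) \<Rightarrow>
      inj (\<lambda>t::real. (poly f t, poly g t, poly h t)) \<and>
      (\<forall>t::real. (poly (pderiv f) t, poly (pderiv g) t, poly (pderiv h) t) \<noteq> (0, 0, 0)))"

definition A_space :: "nat \<Rightarrow> (real poly \<times> real poly \<times> real poly) set" where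
  "A_space d = {(f, g, h). pdeg f \<le> int d - 2 \<and> pdeg g \<le> int d - 1 \<and> pdeg h \<le> int d}"

definition P_space :: "nat \<Rightarrow> (real poly \<times> real poly \<times> real poly) set" where
  "P_space d = {\<phi> \<in> A_space d. poly_knot \<phi> \<and>
      (case \<phi> of (f, g, h) \<Rightarrow> pdeg f < pdeg g \<and> pdeg g < pdeg h \<and> pdeg h \<le> int d)}"

text \<open>The coefficient map eta : A_d \<rightarrow> R^{3d}; R^{3d} is realised as the functions
  nat \<Rightarrow> real vanishing from index 3d on (coordinates 0..3d-1 are
  a_0..a_{d-2}, b_0..b_{d-1}, c_0..c_d), with the product topology, which on this
  subspace is the Euclidean topology.\<close>
definition eta :: "nat \<Rightarrow> real poly \<times> real poly \<times> real poly \<Rightarrow> (nat \<Rightarrow> real)" where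
  "eta d \<phi> = (case \<phi> of (f, g, h) \<Rightarrow> (\<lambda>i.
      if i < d - 1 then coeff f i
      else if i < 2 * d - 1 then coeff g (i - (d - 1))
      else if i < 3 * d then coeff h (i - (2 * d - 1))
      else 0))"

end

theory Submission
  imports Defs
begin

definition CF :: "(real \<Rightarrow> real poly) \<Rightarrow> bool" where
  "CF P \<longleftrightarrow> (\<forall>i. continuous_on {0..1} (\<lambda>s. coeff (P s) i))"

lemma CF_const: "CF (\<lambda>s. p)"
  by (simp add: CF_def)

lemma CF_add: "CF P \<Longrightarrow> CF Q \<Longrightarrow> CF (\<lambda>s. P s + Q s)"
  by (auto simp: CF_def intro!: continuous_intros)

lemma CF_mult: "CF P \<Longrightarrow> CF Q \<Longrightarrow> CF (\<lambda>s. P s * Q s)"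
  by (auto simp: CF_def coeff_mult intro!: continuous_intros)

lemma CF_smult: "continuous_on {0..1} a \<Longrightarrow> CF P \<Longrightarrow> CF (\<lambda>s. smult (a s) (P s))"
  by (auto simp: CF_def intro!: continuous_intros)

lemma CF_pCons: "continuous_on {0..1} a \<Longrightarrow> CF P \<Longrightarrow> CF (\<lambda>s. pCons (a s) (P s))"
  unfolding CF_def
proof
  fix i assume "continuous_on {0..1} a" "\<forall>i. continuous_on {0..1} (\<lambda>s. coeff (P s) i)"
  then show "continuous_on {0..1} (\<lambda>s. coeff (pCons (a s) (P s)) i)"
    by (cases i) auto
qed

lemma CF_pcompose: "CF Q \<Longrightarrow> CF (\<lambda>s. pcompose p (Q s))"
proof (induction p)
  case 0
  then show ?case by (simp add: CF_const)
next
  case (pCons a p)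
  then show ?case
    by (simp add: pcompose_pCons CF_add CF_mult CF_const)
qed

lemma path_lemma:
  assumes "CF F" "CF G" "CF H" "\<forall>s\<in>{0..1}. (F s, G s, H s) \<in> P_space d"
  shows "path_component (eta d ` P_space d) (eta d (F 0, G 0, H 0)) (eta d (F 1, G 1, H 1))"
  unfolding path_component_def
proof (intro exI conjI)
  let ?g = "\<lambda>s. eta d (F s, G s, H s)"
  show "path ?g" unfolding path_def
  proof (rule continuous_on_coordinatewise_then_product)
    fix i
    show "continuous_on {0..1} (\<lambda>x. eta d (F x, G x, H x) i)"
      using assms(1-3) unfolding CF_def eta_def
      by (cases "i < d - 1"; cases "i < 2*d-1"; cases "i < 3*d") simp_all
  qed
  show "path_image ?g \<subseteq> eta d ` P_space d"
    using assms(4) unfolding path_image_def by auto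
qed (auto simp: pathstart_def pathfinish_def)

lemma mem_P: "(f,g,h) \<in> P_space d \<longleftrightarrow> poly_knot (f,g,h) \<and> pdeg f \<le> int d - 2 \<and>
   pdeg g \<le> int d - 1 \<and> pdeg h \<le> int d \<and> pdeg f < pdeg g \<and> pdeg g < pdeg h"
  by (auto simp: P_space_def A_space_def)

lemma knot_g: "inj (poly g) \<Longrightarrow> \<forall>t. poly (pderiv g) t \<noteq> 0 \<Longrightarrow> poly_knot (f,g,h)"
  unfolding poly_knot_def by (auto simp: inj_def)

lemma knot_h: "inj (poly h) \<Longrightarrow> \<forall>t. poly (pderiv h) t \<noteq> 0 \<Longrightarrow> poly_knot (f,g,h)"
  unfolding poly_knot_def by (auto simp: inj_def)

lemma knot_transform:
  assumes "poly_knot (f,g,h)" "a \<noteq> 0" "\<alpha> \<noteq> 0" "\<beta> \<noteq> 0" "\<delta> \<noteq> 0"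
  shows "poly_knot (smult \<alpha> (pcompose f [:b,a:]), smult \<beta> (pcompose g [:b,a:]), smult \<delta> (pcompose h [:b,a:]))"
proof -
  have inj: "inj (\<lambda>t. (poly f t, poly g t, poly h t))"
    and der: "\<And>t. (poly (pderiv f) t, poly (pderiv g) t, poly (pderiv h) t) \<noteq> (0, 0, 0)"
    using assms(1) by (auto simp: poly_knot_def)
  have P: "\<And>p c t. poly (smult c (pcompose p [:b,a:])) t = c * poly p (b + t*a)"
    by (simp add: poly_pcompose)
  have D: "\<And>p c t. poly (pderiv (smult c (pcompose p [:b,a:]))) t = c * (poly (pderiv p) (b + t*a) * a)"
    by (simp add: pderiv_smult pderiv_pcompose poly_pcompose pderiv_pCons)
  have "inj (\<lambda>t. (poly (smult \<alpha> (pcompose f [:b,a:])) t, poly (smult \<beta> (pcompose g [:b,a:])) t,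
        poly (smult \<delta> (pcompose h [:b,a:])) t))"
    unfolding P
  proof (rule injI)
    fix x y
    assume "(\<alpha> * poly f (b + x * a), \<beta> * poly g (b + x * a), \<delta> * poly h (b + x * a)) =
       (\<alpha> * poly f (b + y * a), \<beta> * poly g (b + y * a), \<delta> * poly h (b + y * a))"
    then have "(poly f (b + x*a), poly g (b + x*a), poly h (b+x*a)) = (poly f (b + y*a), poly g (b + y*a), poly h (b+y*a))"
      using assms by simp
    then have "b + x*a = b + y*a" by (rule injD[OF inj])
    then show "x = y" using assms by simp
  qed
  moreover have "\<forall>t. (poly (pderiv (smult \<alpha> (pcompose f [:b,a:]))) t, poly (pderiv (smult \<beta> (pcompose g [:b,a:]))) t,
        poly (pderiv (smult \<delta> (pcompose h [:b,a:]))) t) \<noteq> (0,0,0)"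
    unfolding D using der assms by simp
  ultimately show ?thesis unfolding poly_knot_def by simp
qed

lemma knot_shear:
  assumes "poly_knot (f,g,h)"
  shows "poly_knot (f, g + [:c:], h + smult e g + [:k:])"
proof -
  have inj: "inj (\<lambda>t. (poly f t, poly g t, poly h t))"
    and der: "\<And>t. (poly (pderiv f) t, poly (pderiv g) t, poly (pderiv h) t) \<noteq> (0, 0, 0)"
    using assms(1) by (auto simp: poly_knot_def)
  have "inj (\<lambda>t. (poly f t, poly (g + [:c:]) t, poly (h + smult e g + [:k:]) t))"
  proof (rule injI)
    fix x y
    assume "(poly f x, poly (g + [:c:]) x, poly (h + smult e g + [:k:]) x) = (poly f y, poly (g + [:c:]) y, poly (h + smult e g + [:k:]) y)"
    then have "(poly f x, poly g x, poly h x) = (poly f y, poly g y, poly h y)" by auto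
    then show "x = y" by (rule injD[OF inj])
  qed
  moreover have "\<forall>t. (poly (pderiv f) t, poly (pderiv (g + [:c:])) t, poly (pderiv (h + smult e g + [:k:])) t) \<noteq> (0,0,0)"
    using der by (simp add: pderiv_add pderiv_smult pderiv_pCons)
  ultimately show ?thesis unfolding poly_knot_def by simp
qed

lemma pdeg_transform: "\<alpha> \<noteq> 0 \<Longrightarrow> a \<noteq> 0 \<Longrightarrow> pdeg (smult \<alpha> (pcompose p [:b,a:])) = pdeg p"
  unfolding pdeg_def by (simp add: degree_pcompose pcompose_eq_0_iff)

lemma P_transform:
  assumes "(f,g,h) \<in> P_space d" "a \<noteq> 0" "\<alpha> \<noteq> 0" "\<beta> \<noteq> 0" "\<delta> \<noteq> 0"
  shows "(smult \<alpha> (pcompose f [:b,a:]), smult \<beta> (pcompose g [:b,a:]), smult \<delta> (pcompose h [:b,a:])) \<in> P_space d"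
  using assms knot_transform[of f g h a \<alpha> \<beta> \<delta> b] by (simp add: mem_P pdeg_transform)

lemma convex_lemma:
  assumes "\<forall>s\<in>{0..1}. (smult (1-s) f0 + smult s f1, smult (1-s) g0 + smult s g1,
     smult (1-s) h0 + smult s h1) \<in> P_space d"
  shows "path_component (eta d ` P_space d) (eta d (f0,g0,h0)) (eta d (f1,g1,h1))"
proof -
  have C: "\<And>p q. CF (\<lambda>s. smult (1-s) p + smult s q)"
    by (intro CF_add CF_smult CF_const continuous_intros)
  from path_lemma[OF C C C assms] show ?thesis by simp
qed

lemma conv_same: "smult (1-s) p + smult s p = (p::real poly)"
  by (simp add: smult_add_left[symmetric])

lemma conv_deg: "degree h0 \<le> n \<Longrightarrow> degree h1 \<le> n \<Longrightarrow> degree (smult a h0 + smult b (h1::real poly)) \<le> n"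
  by (meson degree_add_le degree_smult_le order_trans)

lemma conv_coeff: "coeff h0 j = c \<Longrightarrow> coeff h1 j = c \<Longrightarrow> coeff (smult (1-s) h0 + smult s h1) j = (c::real)"
  by (simp add: algebra_simps)

lemma pdeg_nz: "p \<noteq> 0 \<Longrightarrow> pdeg p = int (degree p)"
  by (simp add: pdeg_def)

lemma R_g:
  assumes "d \<ge> 3" "\<beta> \<noteq> 0" "coeff h j \<noteq> 0" "2 \<le> j" "degree h \<le> d"
  shows "(0, [:c,\<beta>:], h) \<in> P_space d"
proof -
  have "poly_knot (0, [:c,\<beta>:], h)"
    by (rule knot_g) (use assms in \<open>auto simp: inj_def pderiv_pCons\<close>)
  moreover have "h \<noteq> 0" using assms by auto
  moreover have "j \<le> degree h" using assms by (simp add: le_degree)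
  ultimately show ?thesis using assms by (simp add: mem_P pdeg_def)
qed

definition T3 :: "real poly" where "T3 = [:0,1,0,1:]"

lemma T3_coeff: "coeff T3 m = (if m = 1 \<or> m = 3 then 1 else 0)"
  unfolding T3_def by (simp add: coeff_pCons split: nat.split)

lemma T3_nz: "T3 \<noteq> 0" by (simp add: T3_def)

lemma T3_degree: "degree T3 = 3"
  unfolding T3_def by simp

lemma inj_T3: "inj (poly T3)"
proof (rule injI)
  fix x y :: real
  assume "poly T3 x = poly T3 y"
  then have e: "x + x^3 = y + y^3" unfolding T3_def by (simp add: algebra_simps power3_eq_cube)
  have "(x - y) * (1 + x^2 + x*y + y^2) = 0"
    using e by (simp add: algebra_simps power2_eq_square power3_eq_cube)
  moreover have "1 + x^2 + x*y + y^2 > 0"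
  proof -
    have "x^2 + x*y + y^2 = (x + y/2)^2 + 3*y^2/4" by (simp add: algebra_simps power2_eq_square)
    moreover have "(x + y/2)^2 \<ge> 0" "3*y^2/4 \<ge> 0" by auto
    ultimately show ?thesis by linarith
  qed
  ultimately show "x = y" by simp
qed

lemma der_T3: "poly (pderiv T3) t \<noteq> 0"
proof -
  have "poly (pderiv T3) t = 1 + 3 * t^2" unfolding T3_def
    by (simp add: pderiv_pCons algebra_simps power2_eq_square)
  moreover have "t^2 \<ge> 0" by simp
  ultimately show ?thesis by linarith
qed

lemma R_h:
  assumes "d \<ge> 3" "g \<noteq> 0" "degree g \<le> 2"
  shows "(0, g, T3) \<in> P_space d"
proof -
  have "poly_knot (0, g, T3)" by (rule knot_h) (use inj_T3 der_T3 in auto)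
  then show ?thesis using assms T3_nz by (simp add: mem_P pdeg_def T3_degree)
qed

lemma H_step:
  assumes "d \<ge> 3" "\<beta> \<noteq> 0" "coeff h0 j = c" "coeff h1 j = c" "c \<noteq> 0" "2 \<le> j"
    "degree h0 \<le> d" "degree h1 \<le> d"
  shows "path_component (eta d ` P_space d) (eta d (0,[:0,\<beta>:],h0)) (eta d (0,[:0,\<beta>:],h1))"
proof (rule convex_lemma, intro ballI)
  fix s :: real
  show "(smult (1-s) 0 + smult s 0, smult (1-s) [:0,\<beta>:] + smult s [:0,\<beta>:], smult (1-s) h0 + smult s h1) \<in> P_space d"
    unfolding conv_same using R_g[OF assms(1,2), of "smult (1-s) h0 + smult s h1" j 0]
      conv_coeff[OF assms(3,4), of s] conv_deg[OF assms(7,8)] assms by simp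
qed

lemma G_step:
  assumes "d \<ge> 3" "coeff g0 j = c" "coeff g1 j = c" "c \<noteq> 0"
    "degree g0 \<le> 2" "degree g1 \<le> 2"
  shows "path_component (eta d ` P_space d) (eta d (0,g0,T3)) (eta d (0,g1,T3))"
proof (rule convex_lemma, intro ballI)
  fix s :: real
  have "smult (1-s) g0 + smult s g1 \<noteq> 0" using conv_coeff[OF assms(2,3), of s] assms(4) by (metis coeff_0)
  then show "(smult (1-s) 0 + smult s 0, smult (1-s) g0 + smult s g1, smult (1-s) T3 + smult s T3) \<in> P_space d"
    unfolding conv_same using R_h[OF assms(1)] conv_deg[OF assms(5,6)] by simp
qed

declare path_component_trans[trans]

lemma G_chain:
  assumes "d \<ge> 3" "\<beta> \<noteq> 0"
  shows "path_component (eta d ` P_space d) (eta d (0,[:0,\<beta>:],T3)) (eta d (0,[:0,1:],T3))"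
proof -
  have "path_component (eta d ` P_space d) (eta d (0,[:0,\<beta>:],T3)) (eta d (0,[:0,\<beta>,1:],T3))"
    by (rule G_step[OF assms(1), of _ 1 \<beta>]) (use assms in auto)
  also have "path_component (eta d ` P_space d) \<dots> (eta d (0,[:0,0,1:],T3))"
    by (rule G_step[OF assms(1), of _ 2 1]) (auto simp: numeral_2_eq_2)
  also have "path_component (eta d ` P_space d) \<dots> (eta d (0,[:0,1,1:],T3))"
    by (rule G_step[OF assms(1), of _ 2 1]) (auto simp: numeral_2_eq_2)
  also have "path_component (eta d ` P_space d) \<dots> (eta d (0,[:0,1:],T3))"
    by (rule G_step[OF assms(1), of _ 1 1]) auto
  finally show ?thesis .
qed

lemma monom_to_T:
  assumes "d \<ge> 3" "\<beta> \<noteq> 0" "\<gamma> \<noteq> 0" "2 \<le> m" "m \<le> d"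
  shows "path_component (eta d ` P_space d) (eta d (0,[:0,\<beta>:],monom \<gamma> m)) (eta d (0,[:0,1:],T3))"
proof -
  have dT: "degree T3 \<le> d" using assms T3_degree by simp
  have dm: "degree (monom \<gamma> m) \<le> d" using assms by (simp add: degree_monom_eq)
  have "path_component (eta d ` P_space d) (eta d (0,[:0,\<beta>:],monom \<gamma> m)) (eta d (0,[:0,\<beta>:],T3))"
  proof (cases "m = 3")
    case False
    have d2: "degree (monom \<gamma> m + T3) \<le> d"
      using dT dm by (meson degree_add_le)
    have "path_component (eta d ` P_space d) (eta d (0,[:0,\<beta>:],monom \<gamma> m)) (eta d (0,[:0,\<beta>:],monom \<gamma> m + T3))"
      by (rule H_step[OF assms(1,2), of _ m \<gamma>]) (use assms False dm d2 in \<open>auto simp: T3_coeff\<close>)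
    also have "path_component (eta d ` P_space d) \<dots> (eta d (0,[:0,\<beta>:],T3))"
      by (rule H_step[OF assms(1,2), of _ 3 1]) (use assms False dT d2 in \<open>auto simp: T3_coeff\<close>)
    finally show ?thesis .
  next
    case True
    have d2: "degree (monom 1 2 :: real poly) \<le> d" using assms by (simp add: degree_monom_eq)
    have d3: "degree (monom \<gamma> m + monom 1 2) \<le> d" using dm d2 by (meson degree_add_le)
    have d4: "degree (monom 1 2 + T3) \<le> d" using dT d2 by (meson degree_add_le)
    have "path_component (eta d ` P_space d) (eta d (0,[:0,\<beta>:],monom \<gamma> m)) (eta d (0,[:0,\<beta>:],monom \<gamma> m + monom 1 2))"
      by (rule H_step[OF assms(1,2), of _ m \<gamma>]) (use assms True dm d3 in \<open>auto\<close>)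
    also have "path_component (eta d ` P_space d) \<dots> (eta d (0,[:0,\<beta>:],monom 1 2))"
      by (rule H_step[OF assms(1,2), of _ 2 1]) (use assms True d2 d3 in \<open>auto\<close>)
    also have "path_component (eta d ` P_space d) \<dots> (eta d (0,[:0,\<beta>:],monom 1 2 + T3))"
      by (rule H_step[OF assms(1,2), of _ 2 1]) (use assms True d2 d4 in \<open>auto simp: T3_coeff\<close>)
    also have "path_component (eta d ` P_space d) \<dots> (eta d (0,[:0,\<beta>:],T3))"
      by (rule H_step[OF assms(1,2), of _ 3 1]) (use assms True dT d4 in \<open>auto simp: T3_coeff\<close>)
    finally show ?thesis .
  qed
  also have "path_component (eta d ` P_space d) \<dots> (eta d (0,[:0,1:],T3))"
    by (rule G_chain[OF assms(1,2)])
  finally show ?thesis .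
qed

lemma monom_factor: "(H::real poly) \<noteq> 0 \<Longrightarrow> \<exists>m Q. H = monom 1 m * Q \<and> coeff Q 0 \<noteq> 0"
proof (induction H)
  case 0
  then show ?case by simp
next
  case (pCons a p)
  show ?case
  proof (cases "a = 0")
    case False
    then show ?thesis by (intro exI[of _ 0] exI[of _ "pCons a p"]) (simp add: monom_0)
  next
    case True
    then have "p \<noteq> 0" using pCons.prems by auto
    then obtain m Q where "p = monom 1 m * Q" "coeff Q 0 \<noteq> 0" using pCons.IH by blast
    then show ?thesis using True by (intro exI[of _ "Suc m"] exI[of _ Q]) (simp add: monom_Suc)
  qed
qed

lemma pdeg_add_low: "1 \<le> degree p \<Longrightarrow> degree q < degree p \<Longrightarrow> pdeg (p + q) = pdeg (p::real poly)"
proof -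
  assume a: "1 \<le> degree p" "degree q < degree p"
  then have "degree (p + q) = degree p" by (simp add: degree_add_eq_left)
  moreover have "p + q \<noteq> 0" "p \<noteq> 0" using a calculation by auto
  ultimately show ?thesis by (simp add: pdeg_def)
qed

lemma CF_lin: "CF (\<lambda>s. [:0, 1 - s:])"
  by (intro CF_pCons CF_const continuous_intros)

lemma caseA:
  assumes d3: "d \<ge> 3" and mem: "(f,g,h) \<in> P_space d" and dg: "degree g \<ge> 1"
  shows "path_component (eta d ` P_space d) (eta d (f,g,h)) (eta d (0,[:0,1:],T3))"
proof -
  let ?S = "eta d ` P_space d"
  have "pderiv g \<noteq> 0" using dg by (simp add: pderiv_eq_0_iff)
  then obtain t0 where t0: "poly (pderiv g) t0 \<noteq> 0" using poly_all_0_iff_0 by blast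
  define f1 where "f1 = pcompose f [:t0, 1:]"
  define g1 where "g1 = pcompose g [:t0, 1:]"
  define h1 where "h1 = pcompose h [:t0, 1:]"
  have step1: "path_component ?S (eta d (f,g,h)) (eta d (f1,g1,h1))"
  proof -
    have CQ: "CF (\<lambda>s. [:s*t0, 1:])" by (intro CF_pCons CF_const continuous_intros)
    have "\<forall>s\<in>{0..1}. (pcompose f [:s*t0, 1:], pcompose g [:s*t0, 1:], pcompose h [:s*t0, 1:]) \<in> P_space d"
      using P_transform[OF mem, of 1 1 1 1] by simp
    from path_lemma[OF CF_pcompose[OF CQ] CF_pcompose[OF CQ] CF_pcompose[OF CQ] this]
    show ?thesis by (simp add: f1_def g1_def h1_def)
  qed
  have mem1: "(f1,g1,h1) \<in> P_space d"
    using P_transform[OF mem, of 1 1 1 1 t0] by (simp add: f1_def g1_def h1_def)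
  have dg1: "degree g1 = degree g" by (simp add: g1_def degree_pcompose)
  have "poly (pderiv g1) 0 = poly (pderiv g) t0"
    by (simp add: g1_def pderiv_pcompose poly_pcompose pderiv_pCons)
  then have c1: "coeff g1 1 \<noteq> 0" using t0 by (simp add: poly_0_coeff_0 coeff_pderiv)
  have gnz: "g1 \<noteq> 0" and hnz: "h1 \<noteq> 0" and dgh: "degree g1 < degree h1" and dh: "degree h1 \<le> d"
    using mem1 dg dg1 by (auto simp: mem_P pdeg_def split: if_splits)
  define \<nu> where "\<nu> = coeff h1 1 / coeff g1 1"
  define \<kappa> where "\<kappa> = coeff h1 0 - \<nu> * coeff g1 0"
  define G1 where "G1 = g1 + [:-coeff g1 0:]"
  define H1 where "H1 = h1 + smult (-\<nu>) g1 + [:-\<kappa>:]"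
  have all2: "\<forall>s\<in>{0..1}. (f1, g1 + [:-(s*coeff g1 0):], h1 + smult (-(s*\<nu>)) g1 + [:-(s*\<kappa>):]) \<in> P_space d"
    proof
      fix s :: real
      have k: "poly_knot (f1, g1 + [:-(s*coeff g1 0):], h1 + smult (-(s*\<nu>)) g1 + [:-(s*\<kappa>):])"
        using mem1 by (intro knot_shear) (simp add: mem_P)
      have e1: "pdeg (g1 + [:-(s*coeff g1 0):]) = pdeg g1"
        using dg dg1 by (intro pdeg_add_low) auto
      have "degree (smult (-(s*\<nu>)) g1 + [:-(s*\<kappa>):]) \<le> degree g1"
        by (metis (no_types, lifting) degree_add_le degree_pCons_0 degree_smult_le le0)
      then have e2: "pdeg (h1 + (smult (-(s*\<nu>)) g1 + [:-(s*\<kappa>):])) = pdeg h1"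
        using dg dg1 dgh by (intro pdeg_add_low) auto
      have e2': "pdeg (h1 + smult (-(s*\<nu>)) g1 + [:-(s*\<kappa>):]) = pdeg h1"
          using e2 by (metis add.assoc)
      show "(f1, g1 + [:-(s*coeff g1 0):], h1 + smult (-(s*\<nu>)) g1 + [:-(s*\<kappa>):]) \<in> P_space d"
        unfolding mem_P e1 e2' using k mem1[unfolded mem_P] by blast
    qed
  have step2: "path_component ?S (eta d (f1,g1,h1)) (eta d (f1,G1,H1))"
  proof -
    have C2: "CF (\<lambda>s. g1 + [:-(s*coeff g1 0):])"
      by (intro CF_add CF_pCons CF_const continuous_intros)
    have C3: "CF (\<lambda>s. h1 + smult (-(s*\<nu>)) g1 + [:-(s*\<kappa>):])"
      by (intro CF_add CF_pCons CF_smult CF_const continuous_intros)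
    note all2
    from path_lemma[OF CF_const C2 C3 this]
    show ?thesis by (simp add: G1_def H1_def)
  qed
  have "(f1, g1 + [:-(1*coeff g1 0):], h1 + smult (-(1*\<nu>)) g1 + [:-(1*\<kappa>):]) \<in> P_space d"
    by (rule all2[rule_format]) simp
  then have mem2: "(f1,G1,H1) \<in> P_space d" by (simp only: mult_1 G1_def H1_def)
  obtain a Q1 where aQ1: "G1 = pCons a Q1" by (metis pCons_cases)
  have "a = 0" using arg_cong[OF aQ1, of "\<lambda>p. coeff p 0"] by (simp add: G1_def)
  then have Q1: "G1 = pCons 0 Q1" using aQ1 by simp
  have bQ1: "coeff Q1 0 \<noteq> 0" using arg_cong[OF Q1, of "\<lambda>p. coeff p 1"] c1 by (simp add: G1_def)
  have dH1: "degree H1 = degree h1"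
  proof -
    have "degree (smult (-\<nu>) g1 + [:-\<kappa>:]) \<le> degree g1"
      by (metis (no_types, lifting) degree_add_le degree_pCons_0 degree_smult_le le0)
    then show ?thesis unfolding H1_def add.assoc using dgh by (intro degree_add_eq_left) auto
  qed
  have H1nz: "H1 \<noteq> 0" using dH1 dgh by auto
  have H10: "coeff H1 0 = 0" by (simp add: H1_def \<kappa>_def)
  have H11: "coeff H1 1 = 0" using c1 by (simp add: H1_def \<nu>_def)
  obtain m Q2 where Q2: "H1 = monom 1 m * Q2" and bQ2: "coeff Q2 0 \<noteq> 0"
    using monom_factor[OF H1nz] by blast
  have Hm: "coeff H1 m = coeff Q2 0" using Q2 by (simp add: coeff_monom_mult)
  have m2: "m \<ge> 2"
  proof (rule ccontr)
    assume "\<not> m \<ge> 2"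
    then have "m = 0 \<or> m = 1" by auto
    then show False using H10 H11 Hm bQ2 by auto
  qed
  have "m \<le> degree H1" using Hm bQ2 by (intro le_degree) simp
  then have md: "m \<le> d" using dH1 dh by simp
  have step3: "path_component ?S (eta d (f1,G1,H1)) (eta d (0,[:0,coeff Q1 0:],monom (coeff Q2 0) m))"
  proof -
    have C1: "CF (\<lambda>s. smult (1-s) (pcompose f1 [:0,1-s:]))"
      by (intro CF_smult CF_pcompose CF_lin continuous_intros)
    have C2: "CF (\<lambda>s. pCons 0 (pcompose Q1 [:0,1-s:]))"
      by (intro CF_pCons CF_pcompose CF_lin continuous_intros)
    have C3: "CF (\<lambda>s. monom 1 m * pcompose Q2 [:0,1-s:])"
      by (intro CF_mult CF_const CF_pcompose CF_lin)
    have "\<forall>s\<in>{0..1}. (smult (1-s) (pcompose f1 [:0,1-s:]), pCons 0 (pcompose Q1 [:0,1-s:]),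
        monom 1 m * pcompose Q2 [:0,1-s:]) \<in> P_space d"
    proof
      fix s :: real assume s: "s \<in> {0..1}"
      show "(smult (1-s) (pcompose f1 [:0,1-s:]), pCons 0 (pcompose Q1 [:0,1-s:]),
        monom 1 m * pcompose Q2 [:0,1-s:]) \<in> P_space d"
      proof (cases "s = 1")
        case True
        have e: "monom 1 m * [:coeff Q2 0:] = monom (coeff Q2 0) m"
          by (simp add: mult.commute smult_monom)
        have "(0, [:0,coeff Q1 0:], monom (coeff Q2 0) m) \<in> P_space d"
          using R_g[OF d3 bQ1, of "monom (coeff Q2 0) m" m 0] bQ2 m2 md
          by (simp add: degree_monom_eq)
        then show ?thesis using True by (simp add: pcompose_0' e smult_monom)
      next
        case False
        define u where "u = 1 - s"
        have u: "u \<noteq> 0" using s False by (simp add: u_def)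
        have eG: "pCons 0 (pcompose Q1 [:0,u:]) = smult (1/u) (pcompose G1 [:0,u:])"
          by (rule poly_eq_poly_eq_iff[THEN iffD1], rule ext) (use u in \<open>simp add: Q1 poly_pcompose\<close>)
        have eH: "monom 1 m * pcompose Q2 [:0,u:] = smult (1/u^m) (pcompose H1 [:0,u:])"
          by (rule poly_eq_poly_eq_iff[THEN iffD1], rule ext)
             (use u in \<open>simp add: Q2 poly_pcompose poly_monom power_mult_distrib\<close>)
        have "(smult u (pcompose f1 [:0,u:]), smult (1/u) (pcompose G1 [:0,u:]), smult (1/u^m) (pcompose H1 [:0,u:])) \<in> P_space d"
          by (rule P_transform[OF mem2 u u]) (use u in auto)
        then show ?thesis using eG eH by (simp add: u_def)
      qed
    qed
    from path_lemma[OF C1 C2 C3 this]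
    show ?thesis using Q1 Q2 by (simp add: pcompose_0' mult.commute smult_monom)
  qed
  have step4: "path_component ?S (eta d (0,[:0,coeff Q1 0:],monom (coeff Q2 0) m)) (eta d (0,[:0,1:],T3))"
    by (rule monom_to_T[OF d3 bQ1 bQ2 m2 md])
  show ?thesis
    by (rule path_component_trans[OF step1 path_component_trans[OF step2 path_component_trans[OF step3 step4]]])
qed

lemma R_hgen:
  assumes "inj (poly h)" "\<forall>t. poly (pderiv h) t \<noteq> 0" "pdeg f \<le> int d - 2" "pdeg g \<le> int d - 1"
    "pdeg h \<le> int d" "pdeg f < pdeg g" "pdeg g < pdeg h"
  shows "(f,g,h) \<in> P_space d"
  using knot_h[OF assms(1,2), of f g] assms by (simp add: mem_P)

lemma caseC2:
  assumes d3: "d \<ge> 3" and c: "c \<noteq> 0" and ih: "inj (poly h)" and dh: "\<forall>t. poly (pderiv h) t \<noteq> 0"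
    and h2: "2 \<le> degree h" "degree h \<le> d"
  shows "path_component (eta d ` P_space d) (eta d (0,[:c:],h)) (eta d (0,[:0,1:],T3))"
proof -
  have "path_component (eta d ` P_space d) (eta d (0,[:c:],h)) (eta d (0,[:c,1:],h))"
  proof (rule convex_lemma, intro ballI)
    fix s :: real
    have e: "smult (1-s) [:c:] + smult s [:c,1:] = [:c, s:]" by (simp add: algebra_simps)
    have "pdeg [:c, s:] \<le> 1" "pdeg [:c,s:] \<ge> 0" using c by (auto simp: pdeg_def)
    moreover have "pdeg h \<ge> 2" "pdeg h \<le> d" using h2 by (auto simp: pdeg_def)
    ultimately have "(0, [:c, s:], h) \<in> P_space d"
      using d3 by (intro R_hgen[OF ih dh]) (auto simp: pdeg_def)
    then show "(smult (1-s) 0 + smult s 0, smult (1-s) [:c:] + smult s [:c,1:], smult (1-s) h + smult s h) \<in> P_space d"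
      unfolding conv_same e by simp
  qed
  also have "path_component (eta d ` P_space d) \<dots> (eta d (0,[:0,1:],T3))"
  proof (rule caseA[OF d3])
    have "pdeg h \<ge> 2" "pdeg h \<le> d" using h2 by (auto simp: pdeg_def)
    then show "(0, [:c,1:], h) \<in> P_space d"
      using d3 by (intro R_hgen[OF ih dh]) (auto simp: pdeg_def)
  qed simp
  finally show ?thesis .
qed

lemma cubic_inj: "(s::real) \<ge> 0 \<Longrightarrow> x + s*x^3 = y + s*y^3 \<Longrightarrow> x = y"
proof -
  assume s: "s \<ge> 0" and e: "x + s*x^3 = y + s*y^3"
  have id: "(x + s*x^3) - (y + s*y^3) = (x - y) * (1 + s*(x^2 + x*y + y^2))"
    unfolding power2_eq_square power3_eq_cube by algebra
  have "x^2 + x*y + y^2 \<ge> 0"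
  proof -
    have "x^2 + x*y + y^2 = (x + y/2)^2 + 3*y^2/4" by (simp add: algebra_simps power2_eq_square)
    moreover have "(x + y/2)^2 \<ge> 0" "3*y^2/4 \<ge> 0" by auto
    ultimately show ?thesis by linarith
  qed
  then have "s*(x^2 + x*y + y^2) \<ge> 0" using s by simp
  then have "1 + s*(x^2 + x*y + y^2) \<noteq> 0" by linarith
  moreover have "(x - y) * (1 + s*(x^2 + x*y + y^2)) = 0" using e id by simp
  ultimately show "x = y" by simp
qed

lemma deg1_form:
  assumes "degree (h::real poly) = 1"
  shows "h = [:coeff h 0, coeff h 1:]" "coeff h 1 \<noteq> 0"
proof -
  show "h = [:coeff h 0, coeff h 1:]"
  proof (rule poly_eqI)
    fix n
    show "coeff h n = coeff [:coeff h 0, coeff h 1:] n"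
    proof (cases "n \<ge> 2")
      case True
      then show ?thesis using assms by (auto simp: coeff_eq_0 coeff_pCons split: nat.split)
    next
      case False
      then have "n = 0 \<or> n = 1" by auto
      then show ?thesis by auto
    qed
  qed
  have "h \<noteq> 0" using assms by auto
  then show "coeff h 1 \<noteq> 0" using assms leading_coeff_0_iff by fastforce
qed

lemma caseC:
  assumes d3: "d \<ge> 3" and mem: "(f,g,h) \<in> P_space d" and dg: "degree g = 0"
  shows "path_component (eta d ` P_space d) (eta d (f,g,h)) (eta d (0,[:0,1:],T3))"
proof -
  from mem have k: "poly_knot (f,g,h)" and pf: "pdeg f < pdeg g" and pg: "pdeg g < pdeg h" and ph: "pdeg h \<le> d"
    by (auto simp: mem_P)
  have gnz: "g \<noteq> 0" using pf by (auto simp: pdeg_def split: if_splits)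
  then have f0: "f = 0" using pf dg by (auto simp: pdeg_def split: if_splits)
  obtain c where gc: "g = [:c:]" using dg by (metis degree_eq_zeroE)
  have c: "c \<noteq> 0" using gnz gc by simp
  have inj0: "inj (\<lambda>t. (poly f t, poly g t, poly h t))"
    and der0: "\<And>t. (poly (pderiv f) t, poly (pderiv g) t, poly (pderiv h) t) \<noteq> (0, 0, 0)"
    using k by (auto simp: poly_knot_def)
  have ih: "inj (poly h)"
  proof (rule injI)
    fix x y assume "poly h x = poly h y"
    then have "(poly f x, poly g x, poly h x) = (poly f y, poly g y, poly h y)" by (simp add: f0 gc)
    then show "x = y" by (rule injD[OF inj0])
  qed
  have dh: "\<forall>t. poly (pderiv h) t \<noteq> 0"
    using der0 by (simp add: f0 gc pderiv_pCons)
  have hnz: "h \<noteq> 0" and h1: "degree h \<ge> 1" and hd: "degree h \<le> d"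
    using pg ph gnz dg by (auto simp: pdeg_def split: if_splits)
  show ?thesis
  proof (cases "degree h \<ge> 2")
    case True
    then show ?thesis unfolding f0 gc using caseC2[OF d3 c ih dh True hd] by simp
  next
    case False
    then have dh1: "degree h = 1" using h1 by simp
    define a0 where "a0 = coeff h 0"
    define a1 where "a1 = coeff h 1"
    have hh: "h = [:a0, a1:]" and a1: "a1 \<noteq> 0"
      using deg1_form[OF dh1] by (simp_all add: a0_def a1_def)
    define h2 where "h2 = [:a0, a1, 0, a1:]"
    have P1: "\<And>s t. poly (smult (1-s) h + smult s h2) t = a0 + a1 * (t + s*t^3)"
    proof -
      fix s t :: real
      show "poly (smult (1-s) h + smult s h2) t = a0 + a1 * (t + s*t^3)"
        by (simp add: hh h2_def power3_eq_cube; algebra)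
    qed
    have P2: "\<And>s t. poly (pderiv (smult (1-s) h + smult s h2)) t = a1 * (1 + 3 * s * t^2)"
    proof -
      fix s t :: real
      have eqd: "pderiv (smult (1-s) h + smult s h2) = smult (1-s) [:a1:] + smult s [:a1, 0, 3*a1:]"
        by (simp add: hh h2_def pderiv_add pderiv_smult pderiv_pCons)
      have "poly (pderiv (smult (1-s) h + smult s h2)) t = (1-s)*a1 + s*(a1 + t*(t*(3*a1)))"
        unfolding eqd by (simp add: algebra_simps)
      also have "\<dots> = a1 * (1 + 3 * s * t^2)" unfolding power2_eq_square by algebra
      finally show "poly (pderiv (smult (1-s) h + smult s h2)) t = a1 * (1 + 3 * s * t^2)" .
    qed
    have K: "\<And>s. s \<ge> 0 \<Longrightarrow> inj (poly (smult (1-s) h + smult s h2)) \<and>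
             (\<forall>t. poly (pderiv (smult (1-s) h + smult s h2)) t \<noteq> 0)"
    proof -
      fix s :: real assume s: "s \<ge> 0"
      have "inj (poly (smult (1-s) h + smult s h2))"
      proof (rule injI)
        fix x y assume "poly (smult (1-s) h + smult s h2) x = poly (smult (1-s) h + smult s h2) y"
        then have "a0 + a1 * (x + s*x^3) = a0 + a1 * (y + s*y^3)" unfolding P1 .
        then have "x + s*x^3 = y + s*y^3" using a1 by simp
        then show "x = y" by (rule cubic_inj[OF s])
      qed
      moreover have "\<forall>t. poly (pderiv (smult (1-s) h + smult s h2)) t \<noteq> 0"
      proof
        fix t :: real
        have "3 * s * t^2 \<ge> 0" using s by simp
        then have "1 + 3 * s * t^2 \<noteq> 0" by linarith
        then show "poly (pderiv (smult (1-s) h + smult s h2)) t \<noteq> 0" unfolding P2 using a1 by simp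
      qed
      ultimately show "inj (poly (smult (1-s) h + smult s h2)) \<and>
             (\<forall>t. poly (pderiv (smult (1-s) h + smult s h2)) t \<noteq> 0)" by blast
    qed
    have co1: "\<And>s. coeff (smult (1-s) h + smult s h2) 1 = a1"
      by (rule conv_coeff) (simp_all add: hh h2_def)
    have dg3: "\<And>s. degree (smult (1-s) h + smult s h2) \<le> 3"
      by (rule conv_deg) (simp_all add: hh h2_def)
    have "path_component (eta d ` P_space d) (eta d (0,[:c:],h)) (eta d (0,[:c:],h2))"
    proof (rule convex_lemma, intro ballI)
      fix s :: real assume s: "s \<in> {0..1}"
      let ?h = "smult (1-s) h + smult s h2"
      have nz: "?h \<noteq> 0" using co1[of s] a1 by (metis coeff_0)
      have "1 \<le> degree ?h" using co1[of s] a1 by (intro le_degree) simp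
      then have "pdeg ?h \<ge> 1" "pdeg ?h \<le> d" using nz dg3[of s] d3 by (auto simp: pdeg_def)
      moreover have "pdeg [:c:] = 0" using c by (simp add: pdeg_def)
      moreover have "pdeg (0::real poly) = -1" by (simp add: pdeg_def)
      moreover have "inj (poly ?h)" "\<forall>t. poly (pderiv ?h) t \<noteq> 0" using K[of s] s by auto
      ultimately have "(0, [:c:], ?h) \<in> P_space d"
        using d3 by (intro R_hgen) auto
      then show "(smult (1-s) 0 + smult s 0, smult (1-s) [:c:] + smult s [:c:], ?h) \<in> P_space d"
        unfolding conv_same by simp
    qed
    also have "path_component (eta d ` P_space d) \<dots> (eta d (0,[:0,1:],T3))"
    proof (rule caseC2[OF d3 c])
      have "smult (1-1) h + smult 1 h2 = h2" by simp
      then show "inj (poly h2)" "\<forall>t. poly (pderiv h2) t \<noteq> 0" using K[of 1] by auto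
      show "2 \<le> degree h2" "degree h2 \<le> d" using a1 d3 by (auto simp: h2_def)
    qed
    finally show ?thesis unfolding f0 gc hh .
  qed
qed

theorem mainTheorem4:
  fixes d :: nat
  assumes "d \<ge> 3"
  shows "path_connected (eta d ` P_space d)"
  unfolding path_connected_component
proof (intro ballI)
  have T: "\<And>\<phi>. \<phi> \<in> P_space d \<Longrightarrow> path_component (eta d ` P_space d) (eta d \<phi>) (eta d (0,[:0,1:],T3))"
  proof -
    fix \<phi> assume "\<phi> \<in> P_space d"
    moreover obtain f g h where "\<phi> = (f,g,h)" by (cases \<phi>) auto
    ultimately show "path_component (eta d ` P_space d) (eta d \<phi>) (eta d (0,[:0,1:],T3))"
    proof (cases "degree g \<ge> 1")
      case True
      then show ?thesis using caseA[OF assms] \<open>\<phi> \<in> P_space d\<close> \<open>\<phi> = (f,g,h)\<close> by simp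
    next
      case False
      then have "degree g = 0" by simp
      then show ?thesis using caseC[OF assms] \<open>\<phi> \<in> P_space d\<close> \<open>\<phi> = (f,g,h)\<close> by simp
    qed
  qed
  fix x y assume "x \<in> eta d ` P_space d" "y \<in> eta d ` P_space d"
  then obtain \<phi> \<psi> where p: "\<phi> \<in> P_space d" "\<psi> \<in> P_space d" and xy: "x = eta d \<phi>" "y = eta d \<psi>" by auto
  show "path_component (eta d ` P_space d) x y"
    unfolding xy by (rule path_component_trans[OF T[OF p(1)] path_component_sym[OF T[OF p(2)]]])
qed

end
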